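(* Let $\alpha: I\to M$ be a unit-speed curve on an oriented surface $M\subset E^3$ with Darboux frame $\{T,V,U\}$ and curvatures $k_g,k_n,\tau_g$. Consider the curve $\gamma$ defined in either of the following two cases: (a) $k_n\equiv0$, $k_g$ and $\tau_g$ nowhere zero, and $\gamma(s)=\alpha(s)+\frac{1}{k_g(s)}V(s)-\frac{k_g'(s)}{k_g(s)^2\tau_g(s)}U(s)$; (b) $k_n$ nowhere zero, $\beta$ an antiderivative of $k_g\tau_g/k_n$, $B$ an antiderivative of $e^{\beta}\tau_g/k_n$, $c_8$ a real constant, $y_2=e^{-\beta}(B+c_8)$, $y_3=-\frac{k_g}{k_n}y_2+\frac{1}{k_n}$, and $\gamma(s)=\alpha(s)+y_2(s)V(s)+y_3(s)U(s)$. In either case assume $\gamma$ is regular. Then $\gamma$ is a general helix if and only if $\alpha$ is an isophote curve on $M$.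
   Context: $M$ is an oriented surface in Euclidean 3-space $E^3$ and $\alpha:I\to M$ is a unit-speed curve with arc-length parameter $s$. Its Darboux frame $\{T,V,U\}$ consists of the unit tangent $T=\alpha'$, the unit surface normal $U$ of $M$ along $\alpha$, and $V=U\times T$; it satisfies $T'=k_gV+k_nU$, $V'=-k_gT+\tau_gU$, $U'=-k_nT-\tau_gV$, where $k_g,k_n,\tau_g$ are the geodesic curvature, normal curvature and geodesic torsion. A regular curve is a general helix if its unit tangent makes a constant angle with a fixed direction. $\alpha$ is an isophote curve if $\langle U,l\rangle$ is constant for some fixed unit vector $l$. *)

theory Defs
  imports "HOL-Analysis.Analysis" "HOL-Analysis.Cross3"
begin

text \<open>Darboux frame of a unit-speed curve alpha on an oriented surface, along the parameter
  set I: T = alpha', U = unit surface normal along alpha, V = U x T, with the Darboux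
  (Frenet-type) equations involving geodesic curvature kg, normal curvature kn and
  geodesic torsion tg.\<close>
definition darboux_frame ::
  "real set \<Rightarrow> (real \<Rightarrow> real^3) \<Rightarrow> (real \<Rightarrow> real^3) \<Rightarrow> (real \<Rightarrow> real^3) \<Rightarrow> (real \<Rightarrow> real^3)
   \<Rightarrow> (real \<Rightarrow> real) \<Rightarrow> (real \<Rightarrow> real) \<Rightarrow> (real \<Rightarrow> real) \<Rightarrow> bool" where
  "darboux_frame I \<alpha> T V U kg kn tg \<longleftrightarrow>
     (\<forall>s\<in>I.
        (\<alpha> has_vector_derivative T s) (at s) \<and>
        norm (T s) = 1 \<and> norm (U s) = 1 \<and> T s \<bullet> U s = 0 \<and>
        V s = cross3 (U s) (T s) \<and>
        (T has_vector_derivative (kg s *\<^sub>R V s + kn s *\<^sub>R U s)) (at s) \<and>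
        (V has_vector_derivative (- kg s *\<^sub>R T s + tg s *\<^sub>R U s)) (at s) \<and>
        (U has_vector_derivative (- kn s *\<^sub>R T s - tg s *\<^sub>R V s)) (at s))"

definition regular_curve :: "(real \<Rightarrow> real^3) \<Rightarrow> real set \<Rightarrow> bool" where
  "regular_curve \<gamma> I \<longleftrightarrow> (\<forall>s\<in>I. \<gamma> differentiable (at s) \<and> vector_derivative \<gamma> (at s) \<noteq> 0)"

definition unit_tangent :: "(real \<Rightarrow> real^3) \<Rightarrow> real \<Rightarrow> real^3" where
  "unit_tangent \<gamma> s = vector_derivative \<gamma> (at s) /\<^sub>R norm (vector_derivative \<gamma> (at s))"

definition general_helix :: "(real \<Rightarrow> real^3) \<Rightarrow> real set \<Rightarrow> bool" where
  "general_helix \<gamma> I \<longleftrightarrow>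
     (\<exists>d::real^3. norm d = 1 \<and> (\<exists>c. \<forall>s\<in>I. unit_tangent \<gamma> s \<bullet> d = c))"

definition isophote :: "real set \<Rightarrow> (real \<Rightarrow> real^3) \<Rightarrow> bool" where
  "isophote I U \<longleftrightarrow> (\<exists>l::real^3. norm l = 1 \<and> (\<exists>c. \<forall>s\<in>I. U s \<bullet> l = c))"

end

theory Submission
  imports Defs
begin


lemma interior_zero_of_signs:
  fixes g g' :: "real \<Rightarrow> real"
  assumes ab: "a < b" and der: "\<forall>x\<in>{a..b}. (g has_real_derivative g' x) (at x)"
    and pa: "g' a > 0" and nb: "g' b < 0"
  shows "\<exists>x. a < x \<and> x < b \<and> g' x = 0"
proof -
  have "continuous_on {a..b} g"
  proof (rule continuous_at_imp_continuous_on, rule ballI)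
    fix x assume "x \<in> {a..b}"
    then show "isCont g x" using der DERIV_isCont by blast
  qed
  then obtain x where x: "x \<in> {a..b}" and mx: "\<forall>y\<in>{a..b}. g y \<le> g x"
    using continuous_attains_sup[of "{a..b}" g] ab by auto
  have xa: "x \<noteq> a"
  proof
    assume "x = a"
    obtain d where d: "d > 0" "\<forall>h>0. h < d \<longrightarrow> g a < g (a + h)"
      using DERIV_pos_inc_right[where f=g and x=a and l="g' a"] der pa ab by auto
    define h where "h = min (d/2) (b - a)"
    have "g a < g (a + h)" using d ab by (auto simp: h_def)
    moreover have "a + h \<in> {a..b}" using d ab by (auto simp: h_def)
    ultimately show False using mx \<open>x = a\<close> by fastforce
  qed
  have xb: "x \<noteq> b"
  proof
    assume "x = b"
    obtain d where d: "d > 0" "\<forall>h>0. h < d \<longrightarrow> g b < g (b - h)"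
      using DERIV_neg_dec_left[where f=g and x=b and l="g' b"] der nb ab by auto
    define h where "h = min (d/2) (b - a)"
    have "g b < g (b - h)" using d ab by (auto simp: h_def)
    moreover have "b - h \<in> {a..b}" using d ab by (auto simp: h_def)
    ultimately show False using mx \<open>x = b\<close> by fastforce
  qed
  have ax: "a < x" "x < b" using x xa xb by auto
  have "g' x = 0"
  proof (rule DERIV_local_max[where f=g and x=x and l="g' x" and d="min (x - a) (b - x)"])
    show "(g has_real_derivative g' x) (at x)" using der x by auto
    show "0 < min (x - a) (b - x)" using ax by auto
    show "\<forall>y. \<bar>x - y\<bar> < min (x - a) (b - x) \<longrightarrow> g y \<le> g x"
      using mx by (auto simp: abs_if split: if_splits)
  qed
  then show ?thesis using ax by auto
qed

lemma deriv_sign_const: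
  fixes g g' :: "real \<Rightarrow> real"
  assumes I: "is_interval I"
    and der: "\<forall>s\<in>I. (g has_real_derivative g' s) (at s)"
    and nz: "\<forall>s\<in>I. g' s \<noteq> 0"
  shows "(\<forall>s\<in>I. g' s > 0) \<or> (\<forall>s\<in>I. g' s < 0)"
proof (rule ccontr)
  assume H: "\<not> ?thesis"
  have H1: "\<not> (\<forall>s\<in>I. g' s < 0)" using H by simp
  have H2: "\<not> (\<forall>s\<in>I. g' s > 0)" using H by simp
  obtain a where a0: "a \<in> I" "\<not> g' a < 0" using H1 by auto
  obtain b where b0: "b \<in> I" "\<not> g' b > 0" using H2 by auto
  have "g' a \<noteq> 0" "g' b \<noteq> 0" using nz a0(1) b0(1) by auto
  then have a: "a \<in> I" "g' a > 0" and b: "b \<in> I" "g' b < 0" using a0 b0 by auto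
  have sub: "z \<in> I" if "x \<in> I" "y \<in> I" "z \<in> {x..y}" for x y z
    by (rule mem_is_interval_1_I[OF I, of x y z]) (use that in auto)
  have "a \<noteq> b" using a b by auto
  then consider "a < b" | "b < a" by linarith
  then show False
  proof cases
    case 1
    have d1: "\<forall>x\<in>{a..b}. (g has_real_derivative g' x) (at x)"
    proof
      fix x assume "x \<in> {a..b}"
      then have "x \<in> I" using sub a(1) b(1) by blast
      then show "(g has_real_derivative g' x) (at x)" using der by blast
    qed
    obtain x where x: "a < x" "x < b" "g' x = 0"
      using interior_zero_of_signs[OF 1 d1 a(2) b(2)] by blast
    have "x \<in> I" using sub[OF a(1) b(1), of x] x by auto
    then show False using nz x by auto
  next
    case 2
    have der2: "\<forall>x\<in>{b..a}. ((\<lambda>x. - g x) has_real_derivative (- g' x)) (at x)"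
    proof
      fix x assume "x \<in> {b..a}"
      then have "x \<in> I" using sub a(1) b(1) by blast
      then show "((\<lambda>x. - g x) has_real_derivative (- g' x)) (at x)" using der DERIV_minus by blast
    qed
    have "0 < - g' b" "- g' a < 0" using a b by auto
    then obtain x where x: "b < x" "x < a" "- g' x = 0"
      using interior_zero_of_signs[OF 2 der2] by blast
    have "x \<in> I" using sub[OF b(1) a(1), of x] x by auto
    then show False using nz x by auto
  qed
qed

lemma unit_tangent_eq:
  assumes "(\<gamma> has_vector_derivative (f *\<^sub>R u)) (at s)" "f \<noteq> 0" "norm u = 1"
  shows "unit_tangent \<gamma> s = sgn f *\<^sub>R u"
  using assms by (simp add: unit_tangent_def vector_derivative_at sgn_if)

lemma helix_iff_generic:
  fixes \<gamma> U :: "real \<Rightarrow> real^3" and f :: "real \<Rightarrow> real"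
  assumes I: "is_interval I"
    and der: "\<forall>s\<in>I. (\<gamma> has_vector_derivative (f s *\<^sub>R U s)) (at s)"
    and nz: "\<forall>s\<in>I. f s \<noteq> 0" and nU: "\<forall>s\<in>I. norm (U s) = 1"
    and cU: "continuous_on I U"
  shows "general_helix \<gamma> I \<longleftrightarrow> isophote I U"
proof -
  have ut: "\<forall>s\<in>I. unit_tangent \<gamma> s = sgn (f s) *\<^sub>R U s"
    using unit_tangent_eq der nz nU by blast
  show ?thesis
  proof
    assume "general_helix \<gamma> I"
    then obtain d c where d: "norm d = 1" and dc: "\<forall>s\<in>I. unit_tangent \<gamma> s \<bullet> d = c"
      unfolding general_helix_def by auto
    have vals: "\<forall>s\<in>I. U s \<bullet> d = sgn (f s) * c"
    proof
      fix s assume s: "s \<in> I"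
      have "sgn (f s) * (U s \<bullet> d) = c" using dc ut s by auto
      then show "U s \<bullet> d = sgn (f s) * c" using nz s
        by (auto simp: sgn_if split: if_splits)
    qed
    have "(\<lambda>s. U s \<bullet> d) ` I \<subseteq> {c, - c}" using vals nz by (auto simp: sgn_if)
    then have fin: "finite ((\<lambda>s. U s \<bullet> d) ` I)" by (rule finite_subset) auto
    have cont: "continuous_on I (\<lambda>s. U s \<bullet> d)"
      using cU by (intro continuous_intros)
    have "(\<lambda>s. U s \<bullet> d) constant_on I"
      using continuous_finite_range_constant[OF is_interval_connected[OF I] cont fin] .
    then obtain k where "\<forall>s\<in>I. U s \<bullet> d = k" unfolding constant_on_def by auto
    then show "isophote I U" unfolding isophote_def using d by auto
  next
    assume "isophote I U"
    then obtain l c where l: "norm l = 1" and lc: "\<forall>s\<in>I. U s \<bullet> l = c"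
      unfolding isophote_def by auto
    show "general_helix \<gamma> I"
    proof (cases "c = 0")
      case True
      then have "\<forall>s\<in>I. unit_tangent \<gamma> s \<bullet> l = 0" using ut lc by auto
      then show ?thesis unfolding general_helix_def using l by auto
    next
      case False
      have dg: "\<forall>s\<in>I. ((\<lambda>s. \<gamma> s \<bullet> l) has_real_derivative (f s * c)) (at s)"
      proof
        fix s assume s: "s \<in> I"
        have "((\<lambda>s. \<gamma> s \<bullet> l) has_vector_derivative ((f s *\<^sub>R U s) \<bullet> l)) (at s)"
          using bounded_linear.has_vector_derivative[OF bounded_linear_inner_left der[rule_format, OF s]] .
        then show "((\<lambda>s. \<gamma> s \<bullet> l) has_real_derivative (f s * c)) (at s)"
          using lc s by (simp add: has_real_derivative_iff_has_vector_derivative)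
      qed
      have "\<forall>s\<in>I. f s * c \<noteq> 0" using nz False by auto
      from deriv_sign_const[OF I dg this]
      have "(\<forall>s\<in>I. f s * c > 0) \<or> (\<forall>s\<in>I. f s * c < 0)" .
      then obtain \<sigma> where "\<forall>s\<in>I. sgn (f s) = \<sigma>"
      proof
        assume "\<forall>s\<in>I. f s * c > 0"
        then have "\<forall>s\<in>I. sgn (f s) = sgn c" by (auto simp: sgn_if zero_less_mult_iff)
        then show ?thesis using that by blast
      next
        assume "\<forall>s\<in>I. f s * c < 0"
        then have "\<forall>s\<in>I. sgn (f s) = - sgn c" by (auto simp: sgn_if mult_less_0_iff)
        then show ?thesis using that by blast
      qed
      then have "\<forall>s\<in>I. unit_tangent \<gamma> s \<bullet> l = \<sigma> * c" using ut lc by auto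
      then show ?thesis unfolding general_helix_def using l by auto
    qed
  qed
qed



lemma caseA:
  fixes \<alpha> T V U \<gamma> :: "real \<Rightarrow> real^3" and kg kn tg :: "real \<Rightarrow> real"
  assumes I: "open I" and df: "darboux_frame I \<alpha> T V U kg kn tg"
    and H: "\<forall>s\<in>I. kn s = 0 \<and> kg s \<noteq> 0 \<and> tg s \<noteq> 0 \<and>
              kg differentiable (at s) \<and> (deriv kg) differentiable (at s) \<and>
              tg differentiable (at s) \<and>
              \<gamma> s = \<alpha> s + (1 / kg s) *\<^sub>R V s
                     - (deriv kg s / ((kg s)\<^sup>2 * tg s)) *\<^sub>R U s"
  shows "\<exists>f. \<forall>s\<in>I. (\<gamma> has_vector_derivative f s *\<^sub>R U s) (at s)"
proof -
  define \<psi> where "\<psi> = (\<lambda>s. deriv kg s / ((kg s)\<^sup>2 * tg s))"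
  define \<phi> where "\<phi> = (\<lambda>s. inverse (kg s))"
  define E where "E = (\<lambda>s. \<alpha> s + \<phi> s *\<^sub>R V s - \<psi> s *\<^sub>R U s)"
  define f where "f = (\<lambda>s. inverse (kg s) * tg s - deriv \<psi> s)"
  have EG: "\<And>y. y \<in> I \<Longrightarrow> E y = \<gamma> y" using H by (auto simp: E_def \<phi>_def \<psi>_def inverse_eq_divide)
  show ?thesis
  proof (intro exI[of _ f] ballI)
    fix s assume s: "s \<in> I"
    have d\<alpha>: "(\<alpha> has_vector_derivative T s) (at s)"
      and dV: "(V has_vector_derivative (- kg s *\<^sub>R T s + tg s *\<^sub>R U s)) (at s)"
      and dU: "(U has_vector_derivative (- kn s *\<^sub>R T s - tg s *\<^sub>R V s)) (at s)"
      using df s unfolding darboux_frame_def by auto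
    have h: "kn s = 0" "kg s \<noteq> 0" "tg s \<noteq> 0" using H s by auto
    have d1: "(kg has_real_derivative deriv kg s) (at s)"
      and d2: "(deriv kg has_real_derivative deriv (deriv kg) s) (at s)"
      and d3: "(tg has_real_derivative deriv tg s) (at s)"
      using H s DERIV_deriv_iff_real_differentiable by blast+
    have d\<phi>: "(\<phi> has_real_derivative (- (deriv kg s * inverse (kg s ^ Suc (Suc 0))))) (at s)"
      unfolding \<phi>_def by (rule DERIV_inverse_fun[OF d1 h(2)])
    have dden: "((\<lambda>s. (kg s)\<^sup>2 * tg s) has_real_derivative
                  (2 * kg s * deriv kg s * tg s + (kg s)\<^sup>2 * deriv tg s)) (at s)"
      by (auto intro!: derivative_eq_intros d1 d3)
    define D where "D = (deriv (deriv kg) s * ((kg s)\<^sup>2 * tg s) - deriv kg s * (2 * kg s * deriv kg s * tg s + (kg s)\<^sup>2 * deriv tg s)) / (((kg s)\<^sup>2 * tg s) * ((kg s)\<^sup>2 * tg s))"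
    have d\<psi>: "(\<psi> has_real_derivative D) (at s)"
      unfolding \<psi>_def D_def by (rule DERIV_divide[OF d2 dden]) (use h in simp)
    have fD: "f s = inverse (kg s) * tg s - D" using DERIV_imp_deriv[OF d\<psi>] by (simp add: f_def)
    have dE: "(E has_vector_derivative (T s + (\<phi> s *\<^sub>R (- kg s *\<^sub>R T s + tg s *\<^sub>R U s) + (- (deriv kg s * inverse (kg s ^ Suc (Suc 0)))) *\<^sub>R V s) - (\<psi> s *\<^sub>R (- kn s *\<^sub>R T s - tg s *\<^sub>R V s) + D *\<^sub>R U s))) (at s)"
      unfolding E_def
      by (intro has_vector_derivative_diff has_vector_derivative_add has_vector_derivative_scaleR d\<alpha> d\<phi> dV d\<psi> dU)
    have X: "T s + (\<phi> s *\<^sub>R (- kg s *\<^sub>R T s + tg s *\<^sub>R U s) + (- (deriv kg s * inverse (kg s ^ Suc (Suc 0)))) *\<^sub>R V s) - (\<psi> s *\<^sub>R (- kn s *\<^sub>R T s - tg s *\<^sub>R V s) + D *\<^sub>R U s)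
        = (1 - \<phi> s * kg s + \<psi> s * kn s) *\<^sub>R T s + (\<psi> s * tg s - deriv kg s * inverse (kg s ^ Suc (Suc 0))) *\<^sub>R V s + (\<phi> s * tg s - D) *\<^sub>R U s"
      by (simp add: algebra_simps)
    have c1: "1 - \<phi> s * kg s + \<psi> s * kn s = 0" using h by (simp add: \<phi>_def)
    have c2: "\<psi> s * tg s - deriv kg s * inverse (kg s ^ Suc (Suc 0)) = 0"
      using h by (simp add: \<psi>_def field_simps power2_eq_square)
    have "(E has_vector_derivative f s *\<^sub>R U s) (at s)"
      using dE unfolding X c1 c2 fD by (simp add: \<phi>_def)
    then show "(\<gamma> has_vector_derivative f s *\<^sub>R U s) (at s)"
      using has_vector_derivative_transform_within_open[OF _ I s] EG by blast
  qed
qed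



lemma caseB:
  fixes \<alpha> T V U \<gamma> :: "real \<Rightarrow> real^3" and kg kn tg \<beta> B :: "real \<Rightarrow> real" and c8 :: real
  assumes I: "open I" and df: "darboux_frame I \<alpha> T V U kg kn tg"
    and H: "\<forall>s\<in>I. kn s \<noteq> 0 \<and>
              kg differentiable (at s) \<and> kn differentiable (at s) \<and>
              (\<beta> has_real_derivative (kg s * tg s / kn s)) (at s) \<and>
              (B has_real_derivative (exp (\<beta> s) * tg s / kn s)) (at s) \<and>
              (let y2 = exp (- \<beta> s) * (B s + c8);
                   y3 = - (kg s / kn s) * y2 + 1 / kn s
               in \<gamma> s = \<alpha> s + y2 *\<^sub>R V s + y3 *\<^sub>R U s)"
  shows "\<exists>f. \<forall>s\<in>I. (\<gamma> has_vector_derivative f s *\<^sub>R U s) (at s)"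
proof -
  define y2 where "y2 = (\<lambda>s. exp (- \<beta> s) * (B s + c8))"
  define y3 where "y3 = (\<lambda>s. (1 - kg s * y2 s) / kn s)"
  define E where "E = (\<lambda>s. \<alpha> s + y2 s *\<^sub>R V s + y3 s *\<^sub>R U s)"
  define f where "f = (\<lambda>s. y2 s * tg s + deriv y3 s)"
  have EG: "E y = \<gamma> y" if y: "y \<in> I" for y
  proof -
    have "kn y \<noteq> 0" using H y by auto
    then have "y3 y = - (kg y / kn y) * y2 y + 1 / kn y"
      by (simp add: y3_def field_simps)
    then show ?thesis using H y by (simp add: E_def y2_def Let_def)
  qed
  show ?thesis
  proof (intro exI[of _ f] ballI)
    fix s assume s: "s \<in> I"
    have d\<alpha>: "(\<alpha> has_vector_derivative T s) (at s)"
      and dV: "(V has_vector_derivative (- kg s *\<^sub>R T s + tg s *\<^sub>R U s)) (at s)"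
      and dU: "(U has_vector_derivative (- kn s *\<^sub>R T s - tg s *\<^sub>R V s)) (at s)"
      using df s unfolding darboux_frame_def by auto
    have h: "kn s \<noteq> 0" using H s by auto
    have d1: "(kg has_real_derivative deriv kg s) (at s)"
      and d2: "(kn has_real_derivative deriv kn s) (at s)"
      using H s DERIV_deriv_iff_real_differentiable by blast+
    have d\<beta>: "(\<beta> has_real_derivative (kg s * tg s / kn s)) (at s)"
      and dB: "(B has_real_derivative (exp (\<beta> s) * tg s / kn s)) (at s)"
      using H s by auto
    define Y2 where "Y2 = exp (- \<beta> s) * (- (kg s * tg s / kn s)) * (B s + c8) + exp (- \<beta> s) * (exp (\<beta> s) * tg s / kn s)"
    have dy2: "(y2 has_real_derivative Y2) (at s)"
      unfolding y2_def Y2_def by (auto intro!: derivative_eq_intros d\<beta> dB)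
    have Y2e: "Y2 = - (kg s * tg s / kn s) * y2 s + tg s / kn s"
      by (simp add: Y2_def y2_def exp_minus field_simps)
    have dnum: "((\<lambda>s. 1 - kg s * y2 s) has_real_derivative (- (deriv kg s * y2 s + kg s * Y2))) (at s)"
      by (auto intro!: derivative_eq_intros d1 dy2)
    define D where "D = ((- (deriv kg s * y2 s + kg s * Y2)) * kn s - (1 - kg s * y2 s) * deriv kn s) / (kn s * kn s)"
    have dy3: "(y3 has_real_derivative D) (at s)"
      unfolding y3_def D_def by (rule DERIV_divide[OF dnum d2 h])
    have fD: "f s = y2 s * tg s + D" using DERIV_imp_deriv[OF dy3] by (simp add: f_def)
    have dE: "(E has_vector_derivative (T s + (y2 s *\<^sub>R (- kg s *\<^sub>R T s + tg s *\<^sub>R U s) + Y2 *\<^sub>R V s) + (y3 s *\<^sub>R (- kn s *\<^sub>R T s - tg s *\<^sub>R V s) + D *\<^sub>R U s))) (at s)"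
      unfolding E_def
      by (intro has_vector_derivative_add has_vector_derivative_scaleR d\<alpha> dy2 dV dy3 dU)
    have X: "T s + (y2 s *\<^sub>R (- kg s *\<^sub>R T s + tg s *\<^sub>R U s) + Y2 *\<^sub>R V s) + (y3 s *\<^sub>R (- kn s *\<^sub>R T s - tg s *\<^sub>R V s) + D *\<^sub>R U s)
        = (1 - y2 s * kg s - y3 s * kn s) *\<^sub>R T s + (Y2 - y3 s * tg s) *\<^sub>R V s + (y2 s * tg s + D) *\<^sub>R U s"
      by (simp add: algebra_simps)
    have c1: "1 - y2 s * kg s - y3 s * kn s = 0" using h by (simp add: y3_def field_simps)
    have c2: "Y2 - y3 s * tg s = 0"
      using h unfolding Y2e by (simp add: y3_def field_simps)
    have "(E has_vector_derivative f s *\<^sub>R U s) (at s)"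
      using dE unfolding X c1 c2 fD by simp
    then show "(\<gamma> has_vector_derivative f s *\<^sub>R U s) (at s)"
      using has_vector_derivative_transform_within_open[OF _ I s] EG by blast
  qed
qed



theorem theorem3p24:
  fixes \<alpha> T V U \<gamma> :: "real \<Rightarrow> real^3" and kg kn tg :: "real \<Rightarrow> real" and I :: "real set"
  assumes "open I" and "is_interval I" and "I \<noteq> {}"
    and "darboux_frame I \<alpha> T V U kg kn tg"
    and "(\<forall>s\<in>I. kn s = 0 \<and> kg s \<noteq> 0 \<and> tg s \<noteq> 0 \<and>
              kg differentiable (at s) \<and> (deriv kg) differentiable (at s) \<and>
              tg differentiable (at s) \<and>
              \<gamma> s = \<alpha> s + (1 / kg s) *\<^sub>R V s
                     - (deriv kg s / ((kg s)\<^sup>2 * tg s)) *\<^sub>R U s)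
         \<or>
         (\<exists>\<beta> B c8 :: _. \<forall>s\<in>I. kn s \<noteq> 0 \<and>
              kg differentiable (at s) \<and> kn differentiable (at s) \<and>
              (\<beta> has_real_derivative (kg s * tg s / kn s)) (at s) \<and>
              (B has_real_derivative (exp (\<beta> s) * tg s / kn s)) (at s) \<and>
              (let y2 = exp (- \<beta> s) * (B s + c8);
                   y3 = - (kg s / kn s) * y2 + 1 / kn s
               in \<gamma> s = \<alpha> s + y2 *\<^sub>R V s + y3 *\<^sub>R U s))"
    and "regular_curve \<gamma> I"
  shows "general_helix \<gamma> I \<longleftrightarrow> isophote I U"
  proof -
  have "\<exists>f. \<forall>s\<in>I. (\<gamma> has_vector_derivative f s *\<^sub>R U s) (at s)"
    using assms(5)
  proof
    assume a: "\<forall>s\<in>I. kn s = 0 \<and> kg s \<noteq> 0 \<and> tg s \<noteq> 0 \<and>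
              kg differentiable (at s) \<and> (deriv kg) differentiable (at s) \<and>
              tg differentiable (at s) \<and>
              \<gamma> s = \<alpha> s + (1 / kg s) *\<^sub>R V s
                     - (deriv kg s / ((kg s)\<^sup>2 * tg s)) *\<^sub>R U s"
    show ?thesis by (rule caseA[OF assms(1) assms(4) a])
  next
    assume "\<exists>\<beta> B c8 :: _. \<forall>s\<in>I. kn s \<noteq> 0 \<and>
              kg differentiable (at s) \<and> kn differentiable (at s) \<and>
              (\<beta> has_real_derivative (kg s * tg s / kn s)) (at s) \<and>
              (B has_real_derivative (exp (\<beta> s) * tg s / kn s)) (at s) \<and>
              (let y2 = exp (- \<beta> s) * (B s + c8);
                   y3 = - (kg s / kn s) * y2 + 1 / kn s
               in \<gamma> s = \<alpha> s + y2 *\<^sub>R V s + y3 *\<^sub>R U s)"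
    then obtain \<beta> B c8 where b: "\<forall>s\<in>I. kn s \<noteq> 0 \<and>
              kg differentiable (at s) \<and> kn differentiable (at s) \<and>
              (\<beta> has_real_derivative (kg s * tg s / kn s)) (at s) \<and>
              (B has_real_derivative (exp (\<beta> s) * tg s / kn s)) (at s) \<and>
              (let y2 = exp (- \<beta> s) * (B s + c8);
                   y3 = - (kg s / kn s) * y2 + 1 / kn s
               in \<gamma> s = \<alpha> s + y2 *\<^sub>R V s + y3 *\<^sub>R U s)" by blast
    show ?thesis by (rule caseB[OF assms(1) assms(4) b])
  qed
  then obtain f where f: "\<forall>s\<in>I. (\<gamma> has_vector_derivative f s *\<^sub>R U s) (at s)" by blast
  have nU: "\<forall>s\<in>I. norm (U s) = 1" using assms(4) unfolding darboux_frame_def by blast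
  have cU: "continuous_on I U"
  proof (rule continuous_at_imp_continuous_on, rule ballI)
    fix s assume s: "s \<in> I"
    then have "(U has_vector_derivative (- kn s *\<^sub>R T s - tg s *\<^sub>R V s)) (at s)"
      using assms(4) unfolding darboux_frame_def by blast
    then show "isCont U s" by (rule has_vector_derivative_continuous)
  qed
  have nz: "\<forall>s\<in>I. f s \<noteq> 0"
  proof
    fix s assume s: "s \<in> I"
    have "vector_derivative \<gamma> (at s) \<noteq> 0" using assms(6) s unfolding regular_curve_def by blast
    moreover have "vector_derivative \<gamma> (at s) = f s *\<^sub>R U s"
      using f s vector_derivative_at by blast
    ultimately show "f s \<noteq> 0" by auto
  qed
  show ?thesis by (rule helix_iff_generic[OF assms(2) f nz nU cU])
qed


end
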